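(* Let $d = 10$. (i) If $n = (4(12m+9)+2) + 4(6k+3)\sqrt{10}$ with $m, k \in \mathbb{Z}$ and $m \equiv 1$ or $2 \pmod 5$, then there exist infinitely many $D(n)$-quadruples in $\mathbb{Z}[\sqrt{10}]$. (ii) If $n = (48m+2) + 24k\sqrt{10}$ with $m, k \in \mathbb{Z}$ and $m \equiv 3$ or $4 \pmod 5$, then there exist infinitely many $D(n)$-quadruples in $\mathbb{Z}[\sqrt{10}]$.
   Context: For $n \in \mathbb{Z}[\sqrt{d}]$, a set $\{a_1,a_2,a_3,a_4\}$ of four distinct non-zero elements of $\mathbb{Z}[\sqrt{d}]$ is called a $D(n)$-quadruple in $\mathbb{Z}[\sqrt{d}]$ if $a_ia_j + n$ is a square of an element of $\mathbb{Z}[\sqrt{d}]$ for all $1 \le i < j \le 4$. *)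

theory Defs
  imports Main
begin

text \<open>Elements of Z[sqrt d] are represented as pairs (a, b) of integers,
standing for a + b sqrt d.\<close>

type_synonym zsqrt = "int \<times> int"

definition zs_add :: "zsqrt \<Rightarrow> zsqrt \<Rightarrow> zsqrt" where
  "zs_add x y = (fst x + fst y, snd x + snd y)"

definition zs_mul :: "int \<Rightarrow> zsqrt \<Rightarrow> zsqrt \<Rightarrow> zsqrt" where
  "zs_mul d x y = (fst x * fst y + d * snd x * snd y, fst x * snd y + snd x * fst y)"

definition zs_is_square :: "int \<Rightarrow> zsqrt \<Rightarrow> bool" where
  "zs_is_square d z \<longleftrightarrow> (\<exists>w. zs_mul d w w = z)"

definition is_Dn_quadruple :: "int \<Rightarrow> zsqrt \<Rightarrow> zsqrt set \<Rightarrow> bool" where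
  "is_Dn_quadruple d n S \<longleftrightarrow>
     card S = 4 \<and> (0, 0) \<notin> S \<and>
     (\<forall>x\<in>S. \<forall>y\<in>S. x \<noteq> y \<longrightarrow> zs_is_square d (zs_add (zs_mul d x y) n))"

end

theory Submission
  imports Defs Complex_Main
begin


definition emb :: "zsqrt \<Rightarrow> real" where
  "emb x = of_int (fst x) + of_int (snd x) * sqrt 10"

lemma s10: "sqrt (10::real) * sqrt 10 = 10" by simp

lemma emb_pair: "emb (a, b) = of_int a + of_int b * sqrt 10"
  by (simp add: emb_def)

lemma emb_mul: "emb (zs_mul 10 x y) = emb x * emb y"
proof -
  have "emb x * emb y = of_int (fst x) * of_int (fst y) + of_int (snd x) * of_int (snd y) * (sqrt 10 * sqrt 10)
      + (of_int (fst x) * of_int (snd y) + of_int (snd x) * of_int (fst y)) * sqrt 10"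
    by (simp add: emb_def algebra_simps)
  then show ?thesis by (simp add: emb_def zs_mul_def algebra_simps)
qed

lemma emb_add: "emb (zs_add x y) = emb x + emb y"
  by (simp add: emb_def zs_add_def algebra_simps)

lemma sq10: "(a::int)^2 = 10 * b^2 \<Longrightarrow> b = 0"
proof (induction "nat \<bar>b\<bar>" arbitrary: a b rule: less_induct)
  case less
  show ?case
  proof (rule ccontr)
    assume b0: "b \<noteq> 0"
    have "even (a^2)" using less.prems by simp
    then have "even a" by simp
    then obtain c where c: "a = 2 * c" by blast
    have "2 * c^2 = 5 * b^2" using less.prems c by (simp add: power_mult_distrib)
    then have "even (5 * b^2)" by (metis dvd_triv_left)
    then have "even b" by simp
    then obtain d where d: "b = 2 * d" by blast
    have "c^2 = 10 * d^2" using \<open>2 * c^2 = 5 * b^2\<close> d by (simp add: power_mult_distrib)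
    moreover have "nat \<bar>d\<bar> < nat \<bar>b\<bar>" using d b0 by auto
    ultimately have "d = 0" using less.hyps by blast
    then show False using d b0 by simp
  qed
qed

lemma emb_inj: assumes "emb x = emb y" shows "x = y"
proof -
  obtain a b c d where x: "x = (a, b)" and y: "y = (c, d)" by (cases x, cases y) 
  have e: "of_int (a - c) = of_int (d - b) * sqrt (10::real)"
    using assms by (simp add: x y emb_def algebra_simps)
  then have "(of_int (a - c))^2 = (of_int (d - b) * sqrt (10::real))^2" by simp
  then have "real_of_int ((a - c)^2) = real_of_int (10 * (d - b)^2)"
    by (simp add: power_mult_distrib)
  then have "(a - c)^2 = 10 * (d - b)^2" by (simp only: of_int_eq_iff)
  then have "d - b = 0" by (rule sq10)
  with e have "a - c = 0" by simp
  with \<open>d - b = 0\<close> show ?thesis by (simp add: x y)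
qed

lemma emb_zero: "emb (0, 0) = 0" by (simp add: emb_def)

lemma sqI: "emb w * emb w = emb x * emb y + emb n \<Longrightarrow> zs_is_square 10 (zs_add (zs_mul 10 x y) n)"
  unfolding zs_is_square_def
  by (rule exI[of _ w], rule emb_inj) (simp add: emb_mul emb_add)

lemma zs_mul_comm: "zs_mul 10 x y = zs_mul 10 y x"
  by (simp add: zs_mul_def algebra_simps)



definition zs_neg :: "zsqrt \<Rightarrow> zsqrt" where "zs_neg x = (- fst x, - snd x)"
lemma emb_neg: "emb (zs_neg x) = - emb x" by (simp add: emb_def zs_neg_def)

lemma real_core:
  fixes E F x y nn g l :: real
  assumes g: "4 * g = E + F" and l: "4 * l = F - E - 2 * x"
    and ef: "E * F = 4 * nn - x^2" and xy: "x^2 = y^2 + 3 * nn"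
  shows "g * g = l * (x + l) + nn"
    "(g - l) * (g - l) = l * (- E) + nn"
    "(g + l) * (g + l) = l * F + nn"
    "(x + l - g) * (x + l - g) = (x + l) * (- E) + nn"
    "(x + l + g) * (x + l + g) = (x + l) * F + nn"
    "y * y = (- E) * F + nn"
proof -
  have G: "g = (E + F) / 4" using g by simp
  have L: "l = (F - E - 2 * x) / 4" using l by simp
  have N: "nn = (E * F + x^2) / 4" using ef by simp
  have Y: "y^2 = x^2 - 3 * nn" using xy by simp
  show "g * g = l * (x + l) + nn" unfolding G L N by (simp add: field_simps power2_eq_square algebra_simps)
  show "(g - l) * (g - l) = l * (- E) + nn" unfolding G L N by (simp add: field_simps power2_eq_square algebra_simps)
  show "(g + l) * (g + l) = l * F + nn" unfolding G L N by (simp add: field_simps power2_eq_square algebra_simps)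
  show "(x + l - g) * (x + l - g) = (x + l) * (- E) + nn" unfolding G L N by (simp add: field_simps power2_eq_square algebra_simps)
  show "(x + l + g) * (x + l + g) = (x + l) * F + nn" unfolding G L N by (simp add: field_simps power2_eq_square algebra_simps)
  show "y * y = (- E) * F + nn" using Y N by (simp add: power2_eq_square field_simps)
qed



definition qe :: "zsqrt \<Rightarrow> int \<Rightarrow> int \<Rightarrow> zsqrt" where
  "qe Z a b = zs_mul 10 Z (1 + 4 * a, 4 * b)"
definition qf :: "zsqrt \<Rightarrow> int \<Rightarrow> int \<Rightarrow> zsqrt" where
  "qf C a b = zs_mul 10 C (1 + 4 * a, - 4 * b)"
definition qL :: "zsqrt \<Rightarrow> zsqrt \<Rightarrow> zsqrt \<Rightarrow> int \<Rightarrow> int \<Rightarrow> zsqrt" where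
  "qL L0 Z C a b = zs_add L0 (zs_add (zs_mul 10 C (a, - b)) (zs_neg (zs_mul 10 Z (a, b))))"
definition qG :: "zsqrt \<Rightarrow> zsqrt \<Rightarrow> zsqrt \<Rightarrow> int \<Rightarrow> int \<Rightarrow> zsqrt" where
  "qG G0 Z C a b = zs_add G0 (zs_add (zs_mul 10 Z (a, b)) (zs_mul 10 C (a, - b)))"
definition quadS :: "zsqrt \<Rightarrow> zsqrt \<Rightarrow> zsqrt \<Rightarrow> zsqrt \<Rightarrow> int \<Rightarrow> int \<Rightarrow> zsqrt set" where
  "quadS X Z C L0 a b = {qL L0 Z C a b, zs_add X (qL L0 Z C a b), zs_neg (qe Z a b), qf C a b}"

lemma quad_from_emb:
  fixes p1 p2 p3 p4 :: zsqrt and n :: zsqrt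
  assumes d: "emb p1 \<noteq> emb p2" "emb p1 \<noteq> emb p3" "emb p1 \<noteq> emb p4"
     "emb p2 \<noteq> emb p3" "emb p2 \<noteq> emb p4" "emb p3 \<noteq> emb p4"
    and z: "emb p1 \<noteq> 0" "emb p2 \<noteq> 0" "emb p3 \<noteq> 0" "emb p4 \<noteq> 0"
    and s: "zs_is_square 10 (zs_add (zs_mul 10 p1 p2) n)"
     "zs_is_square 10 (zs_add (zs_mul 10 p1 p3) n)"
     "zs_is_square 10 (zs_add (zs_mul 10 p1 p4) n)"
     "zs_is_square 10 (zs_add (zs_mul 10 p2 p3) n)"
     "zs_is_square 10 (zs_add (zs_mul 10 p2 p4) n)"
     "zs_is_square 10 (zs_add (zs_mul 10 p3 p4) n)"
  shows "is_Dn_quadruple 10 n {p1, p2, p3, p4}"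
proof -
  have ne: "p1 \<noteq> p2" "p1 \<noteq> p3" "p1 \<noteq> p4" "p2 \<noteq> p3" "p2 \<noteq> p4" "p3 \<noteq> p4"
    using d by auto
  have nz: "p1 \<noteq> (0,0)" "p2 \<noteq> (0,0)" "p3 \<noteq> (0,0)" "p4 \<noteq> (0,0)"
    using z emb_zero by auto
  have c: "card {p1, p2, p3, p4} = 4" using ne by simp
  have s': "zs_is_square 10 (zs_add (zs_mul 10 p2 p1) n)"
     "zs_is_square 10 (zs_add (zs_mul 10 p3 p1) n)"
     "zs_is_square 10 (zs_add (zs_mul 10 p4 p1) n)"
     "zs_is_square 10 (zs_add (zs_mul 10 p3 p2) n)"
     "zs_is_square 10 (zs_add (zs_mul 10 p4 p2) n)"
     "zs_is_square 10 (zs_add (zs_mul 10 p4 p3) n)"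
    using s by (simp_all add: zs_mul_comm)
  show ?thesis unfolding is_Dn_quadruple_def
    using c nz s s' by auto
qed

lemma generic:
  fixes n X Y C Z G0 L0 :: zsqrt and a b :: int
  assumes A: "4 * fst G0 = fst Z + fst C" "4 * snd G0 = snd Z + snd C"
    and B: "4 * fst L0 = fst C - fst Z - 2 * fst X" "4 * snd L0 = snd C - snd Z - 2 * snd X"
    and Cq: "emb Z * emb C = 4 * emb n - (emb X)^2"
    and D: "(emb X)^2 = (emb Y)^2 + 3 * emb n"
    and E: "(1 + 4 * a)^2 - 10 * (4 * b)^2 = 1"
    and Zp: "emb Z \<ge> 1" and eta1: "emb (1 + 4 * a, 4 * b) \<ge> 1"
    and big: "emb (1 + 4 * a, 4 * b) > 3 * \<bar>emb C\<bar> + 2 * \<bar>emb X\<bar>"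
    and Cnz: "emb C \<noteq> 0" and Xnz: "emb X \<noteq> 0"
  shows "is_Dn_quadruple 10 n (quadS X Z C L0 a b)"
proof -
  define u where "u = emb (1 + 4 * a, 4 * b)"
  define ub where "ub = emb (1 + 4 * a, - 4 * b)"
  have "zs_mul 10 (1 + 4 * a, 4 * b) (1 + 4 * a, - 4 * b) = ((1 + 4 * a)^2 - 10 * (4 * b)^2, 0)"
    by (simp add: zs_mul_def power2_eq_square algebra_simps)
  then have "u * ub = 1" unfolding u_def ub_def using E by (metis emb_mul emb_pair of_int_1 of_int_0 mult_zero_left add_0_right)
  have u: "u = 1 + 4 * emb (a, b)" unfolding u_def by (simp add: emb_def algebra_simps)
  have ub: "ub = 1 + 4 * emb (a, - b)" unfolding ub_def by (simp add: emb_def algebra_simps)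
  define Ee where "Ee = emb (qe Z a b)"
  define Ff where "Ff = emb (qf C a b)"
  have Ee: "Ee = emb Z * u" unfolding Ee_def qe_def u_def by (simp add: emb_mul)
  have Ff: "Ff = emb C * ub" unfolding Ff_def qf_def ub_def by (simp add: emb_mul)
  have G0: "4 * emb G0 = emb Z + emb C"
  proof -
    have "4 * emb G0 = of_int (4 * fst G0) + of_int (4 * snd G0) * sqrt 10" by (simp add: emb_def algebra_simps)
    also have "\<dots> = of_int (fst Z + fst C) + of_int (snd Z + snd C) * sqrt 10" by (simp only: A)
    also have "\<dots> = emb Z + emb C" by (simp add: emb_def algebra_simps)
    finally show ?thesis .
  qed
  have L0: "4 * emb L0 = emb C - emb Z - 2 * emb X"
  proof -
    have "4 * emb L0 = of_int (4 * fst L0) + of_int (4 * snd L0) * sqrt 10" by (simp add: emb_def algebra_simps)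
    also have "\<dots> = of_int (fst C - fst Z - 2 * fst X) + of_int (snd C - snd Z - 2 * snd X) * sqrt 10" by (simp only: B)
    also have "\<dots> = emb C - emb Z - 2 * emb X" by (simp add: emb_def algebra_simps)
    finally show ?thesis .
  qed
  define g where "g = emb (qG G0 Z C a b)"
  define l where "l = emb (qL L0 Z C a b)"
  have g: "4 * g = Ee + Ff"
  proof -
    have "g = emb G0 + emb Z * emb (a, b) + emb C * emb (a, - b)"
      unfolding g_def qG_def by (simp add: emb_add emb_mul)
    then show ?thesis using G0 Ee Ff u ub by (simp add: algebra_simps)
  qed
  have l: "4 * l = Ff - Ee - 2 * emb X"
  proof -
    have "l = emb L0 + emb C * emb (a, - b) - emb Z * emb (a, b)"
      unfolding l_def qL_def by (simp add: emb_add emb_mul emb_neg)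
    then show ?thesis using L0 Ee Ff u ub by (simp add: algebra_simps)
  qed
  have ef: "Ee * Ff = 4 * emb n - (emb X)^2"
  proof -
    have "Ee * Ff = emb Z * emb C * (u * ub)" using Ee Ff by (simp add: algebra_simps)
    then show ?thesis using \<open>u * ub = 1\<close> Cq by simp
  qed
  note R = real_core[OF g l ef D]
  let ?p1 = "qL L0 Z C a b" and ?p2 = "zs_add X (qL L0 Z C a b)"
    and ?p3 = "zs_neg (qe Z a b)" and ?p4 = "qf C a b"
  let ?G = "qG G0 Z C a b"
  have e1: "emb ?p1 = l" "emb ?p2 = emb X + l" "emb ?p3 = - Ee" "emb ?p4 = Ff"
    by (simp_all add: l_def Ee_def Ff_def emb_add emb_neg)
  have s1: "zs_is_square 10 (zs_add (zs_mul 10 ?p1 ?p2) n)"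
    by (rule sqI[of ?G]) (use R(1) e1 in \<open>simp add: g_def\<close>)
  have s2: "zs_is_square 10 (zs_add (zs_mul 10 ?p1 ?p3) n)"
    by (rule sqI[of "zs_add ?G (zs_neg ?p1)"]) (use R(2) e1 in \<open>simp add: g_def emb_add emb_neg\<close>)
  have s3: "zs_is_square 10 (zs_add (zs_mul 10 ?p1 ?p4) n)"
    by (rule sqI[of "zs_add ?G ?p1"]) (use R(3) e1 in \<open>simp add: g_def emb_add emb_neg\<close>)
  have s4: "zs_is_square 10 (zs_add (zs_mul 10 ?p2 ?p3) n)"
    by (rule sqI[of "zs_add ?p2 (zs_neg ?G)"]) (use R(4) e1 in \<open>simp add: g_def emb_add emb_neg algebra_simps\<close>)
  have s5: "zs_is_square 10 (zs_add (zs_mul 10 ?p2 ?p4) n)"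
    by (rule sqI[of "zs_add ?p2 ?G"]) (use R(5) e1 in \<open>simp add: g_def emb_add emb_neg algebra_simps\<close>)
  have s6: "zs_is_square 10 (zs_add (zs_mul 10 ?p3 ?p4) n)"
    by (rule sqI[of Y]) (use R(6) e1 in \<open>simp add: emb_add emb_neg\<close>)
  have upos: "u \<ge> 1" using eta1 u_def by simp
  have ub_pos: "ub > 0" "ub \<le> 1"
  proof -
    have "ub = 1 / u" using \<open>u * ub = 1\<close> upos by (simp add: field_simps)
    then show "ub > 0" "ub \<le> 1" using upos by auto
  qed
  have Fb: "\<bar>Ff\<bar> \<le> \<bar>emb C\<bar>" using Ff ub_pos by (simp add: abs_mult mult_left_le)
  have "(emb Z - 1) * u \<ge> 0" using Zp upos by simp
  then have Eu: "Ee \<ge> u" using Ee by (simp add: algebra_simps)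
  have big2: "Ee > 3 * \<bar>Ff\<bar> + 2 * \<bar>emb X\<bar>" using Eu big Fb u_def by linarith
  have Fnz: "Ff \<noteq> 0" using Ff ub_pos Cnz by simp
  have dist: "l \<noteq> emb X + l" "l \<noteq> - Ee" "l \<noteq> Ff" "emb X + l \<noteq> - Ee" "emb X + l \<noteq> Ff" "- Ee \<noteq> Ff"
    and nz: "l \<noteq> 0" "emb X + l \<noteq> 0" "- Ee \<noteq> 0" "Ff \<noteq> 0"
    using l big2 Xnz Fnz abs_ge_self[of Ff] abs_ge_minus_self[of Ff]
      abs_ge_self[of "emb X"] abs_ge_minus_self[of "emb X"] by linarith+
  show ?thesis unfolding quadS_def
    by (rule quad_from_emb) (use dist nz e1 s1 s2 s3 s4 s5 s6 in simp_all)
qed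



lemma mod4_shift: "(x::int) = y + 4 * z \<Longrightarrow> x mod 4 = y mod 4" by simp

fun pw :: "nat \<Rightarrow> zsqrt" where
  "pw 0 = (1, 0)"
| "pw (Suc i) = zs_mul 10 (721, 228) (pw i)"

lemma pw_props: "(fst (pw i))^2 - 10 * (snd (pw i))^2 = 1 \<and> fst (pw i) mod 4 = 1 \<and> snd (pw i) mod 4 = 0
   \<and> fst (pw i) \<ge> int i + 1 \<and> snd (pw i) \<ge> 0"
proof (induction i)
  case 0
  then show ?case by simp
next
  case (Suc i)
  obtain p q where pq: "pw i = (p, q)" by (cases "pw i")
  have IH: "p^2 - 10 * q^2 = 1" "p mod 4 = 1" "q mod 4 = 0" "p \<ge> int i + 1" "q \<ge> 0"
    using Suc.IH pq by auto
  have s: "pw (Suc i) = (721 * p + 2280 * q, 721 * q + 228 * p)"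
    by (simp add: pq zs_mul_def)
  have n: "(721 * p + 2280 * q)^2 - 10 * (721 * q + 228 * p)^2 = (721^2 - 10*228^2) * (p^2 - 10 * q^2)"
    by (simp add: power2_eq_square algebra_simps)
  have m1: "(721 * p + 2280 * q) mod 4 = 1"
  proof -
    have eq: "721 * p + 2280 * q = p + 4 * (180 * p + 570 * q)" by simp
    show ?thesis using mod4_shift[OF eq] IH(2) by simp
  qed
  have m2: "(721 * q + 228 * p) mod 4 = 0"
  proof -
    have eq: "721 * q + 228 * p = q + 4 * (180 * q + 57 * p)" by simp
    show ?thesis using mod4_shift[OF eq] IH(3) by simp
  qed
  show ?case using n IH m1 m2 s by simp
qed

lemma pw_emb: "emb (pw i) \<ge> real i + 1"
proof -
  have "fst (pw i) \<ge> int i + 1" "snd (pw i) \<ge> 0" using pw_props by auto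
  then have "emb (pw i) \<ge> of_int (fst (pw i))"
    by (simp add: emb_def)
  moreover have "real_of_int (fst (pw i)) \<ge> real i + 1" using \<open>fst (pw i) \<ge> int i + 1\<close> by linarith
  ultimately show ?thesis by linarith
qed

lemma pw_inj: "inj pw"
proof -
  have "fst (pw i) < fst (pw (Suc i))" for i
  proof -
    obtain p q where pq: "pw i = (p, q)" by (cases "pw i")
    have "p \<ge> 1" "q \<ge> 0" using pw_props[of i] pq by auto
    then show ?thesis by (simp add: pq zs_mul_def)
  qed
  then have "strict_mono (\<lambda>i. fst (pw i))" by (simp add: strict_mono_Suc_iff)
  then have "inj (\<lambda>i. fst (pw i))" by (rule strict_mono_imp_inj_on)
  then show ?thesis by (auto simp: inj_def)
qed

lemma mod4_1: assumes "x mod 4 = (1::int)" shows "1 + 4 * ((x - 1) div 4) = x"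
proof -
  have h: "x = 4 * (x div 4) + 1" using assms div_mult_mod_eq[of x 4] by linarith
  then have "x - 1 = 4 * (x div 4)" by linarith
  then have "(x - 1) div 4 = x div 4" by simp
  then show ?thesis using h by linarith
qed

lemma mod4_0: assumes "x mod 4 = (0::int)" shows "4 * (x div 4) = x"
  using assms div_mult_mod_eq[of x 4] by linarith

lemma infinite_from_family:
  assumes "\<And>i. i \<in> I \<Longrightarrow> P (F i)" "infinite I" "inj_on g I" "\<And>i. i \<in> I \<Longrightarrow> g i \<in> F i"
    "\<And>i. i \<in> I \<Longrightarrow> finite (F i)"
  shows "infinite {S. P S}"
proof
  assume fin: "finite {S. P S}"
  have "F ` I \<subseteq> {S. P S}" using assms(1) by auto
  then have "finite (F ` I)" using fin finite_subset by blast
  then have "finite (\<Union> (F ` I))" using assms(5) by auto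
  moreover have "g ` I \<subseteq> \<Union> (F ` I)" using assms(4) by auto
  ultimately have "finite (g ` I)" using finite_subset by blast
  then have "finite I" using assms(3) finite_imageD by blast
  then show False using assms(2) by simp
qed

lemma family:
  fixes n X Y C Z GG LL :: zsqrt
  assumes A: "4 * fst GG = fst Z + fst C" "4 * snd GG = snd Z + snd C"
    and B: "4 * fst LL = fst C - fst Z - 2 * fst X" "4 * snd LL = snd C - snd Z - 2 * snd X"
    and Cq: "emb Z * emb C = 4 * emb n - (emb X)^2"
    and D: "(emb X)^2 = (emb Y)^2 + 3 * emb n"
    and Zp: "emb Z \<ge> 1"
    and Cnz: "emb C \<noteq> 0" and Xnz: "emb X \<noteq> 0"
  shows "infinite {S. is_Dn_quadruple 10 n S}"
proof -
  define B0 where "B0 = 3 * \<bar>emb C\<bar> + 2 * \<bar>emb X\<bar>"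
  define N where "N = nat \<lceil>B0\<rceil>"
  define a where "a i = (fst (pw i) - 1) div 4" for i
  define b where "b i = snd (pw i) div 4" for i
  have ab: "(1 + 4 * a i, 4 * b i) = pw i" for i
  proof -
    have "fst (pw i) mod 4 = 1" "snd (pw i) mod 4 = 0" using pw_props[of i] by auto
    then have "1 + 4 * a i = fst (pw i)" "4 * b i = snd (pw i)"
      unfolding a_def b_def using mod4_1 mod4_0 by auto
    then show ?thesis by (simp add: prod_eq_iff)
  qed
  define F where "F i = quadS X Z C LL (a i) (b i)" for i
  define g where "g i = zs_neg (qe Z (a i) (b i))" for i
  show ?thesis
  proof (rule infinite_from_family[where I = "{N..}" and F = F and g = g])
    fix i assume i: "i \<in> {N..}"
    have "real i \<ge> real N" using i by simp
    moreover have "real N \<ge> B0" unfolding N_def by (rule real_nat_ceiling_ge)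
    ultimately have "real i \<ge> B0" by linarith
    have E: "(1 + 4 * a i)^2 - 10 * (4 * b i)^2 = 1"
      using pw_props[of i] ab[of i] by (metis fst_conv snd_conv)
    have e1: "emb (1 + 4 * a i, 4 * b i) \<ge> 1" using pw_emb[of i] ab[of i] by simp
    have e2: "emb (1 + 4 * a i, 4 * b i) > B0" using pw_emb[of i] ab[of i] \<open>real i \<ge> B0\<close> by simp
    show "is_Dn_quadruple 10 n (F i)" unfolding F_def
      by (rule generic[OF A B Cq D E Zp e1 _ Cnz Xnz]) (use e2 B0_def in simp)
    show "g i \<in> F i" unfolding F_def g_def quadS_def by simp
    show "finite (F i)" unfolding F_def quadS_def by simp
  next
    show "infinite {N..}" by (rule infinite_Ici)
  next
    show "inj_on g {N..}"
    proof (rule inj_onI)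
      fix i j assume "g i = g j"
      then have "emb (g i) = emb (g j)" by simp
      then have "emb Z * emb (pw i) = emb Z * emb (pw j)"
        unfolding g_def qe_def by (simp add: emb_neg emb_mul ab)
      then have "emb (pw i) = emb (pw j)" using Zp by simp
      then have "pw i = pw j" by (rule emb_inj)
      then show "i = j" using pw_inj by (simp add: inj_eq)
    qed
  qed
qed



lemma Cq_from_pair:
  assumes "zs_mul 10 Z C = (4 * fst n - fst (zs_mul 10 X X), 4 * snd n - snd (zs_mul 10 X X))"
  shows "emb Z * emb C = 4 * emb n - (emb X)^2"
proof -
  have "emb Z * emb C = emb (4 * fst n - fst (zs_mul 10 X X), 4 * snd n - snd (zs_mul 10 X X))"
    using assms emb_mul by metis
  also have "\<dots> = 4 * emb n - emb (zs_mul 10 X X)" by (simp add: emb_def algebra_simps)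
  also have "\<dots> = 4 * emb n - (emb X)^2" by (simp add: emb_mul power2_eq_square)
  finally show ?thesis .
qed

lemma D_from_pair:
  assumes "fst (zs_mul 10 X X) = fst (zs_mul 10 Y Y) + 3 * fst n"
    "snd (zs_mul 10 X X) = snd (zs_mul 10 Y Y) + 3 * snd n"
  shows "(emb X)^2 = (emb Y)^2 + 3 * emb n"
proof -
  have "(emb X)^2 = emb (zs_mul 10 X X)" by (simp add: emb_mul power2_eq_square)
  also have "\<dots> = of_int (fst (zs_mul 10 Y Y) + 3 * fst n) + of_int (snd (zs_mul 10 Y Y) + 3 * snd n) * sqrt 10"
    unfolding emb_def assms ..
  also have "\<dots> = emb (zs_mul 10 Y Y) + 3 * emb n" by (simp add: emb_def algebra_simps)
  also have "\<dots> = (emb Y)^2 + 3 * emb n" by (simp add: emb_mul power2_eq_square)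
  finally show ?thesis .
qed

lemma nz_from_odd: assumes "odd (snd x)" shows "emb x \<noteq> 0"
proof
  assume "emb x = 0"
  then have "x = (0, 0)" using emb_zero emb_inj by metis
  then show False using assms by simp
qed

definition X1_1 :: "int \<Rightarrow> int \<Rightarrow> zsqrt" where
  "X1_1 t k = ((240*t + 60*k + 118), (60*t + 24*k + 33))"

definition Y1_1 :: "int \<Rightarrow> int \<Rightarrow> zsqrt" where
  "Y1_1 t k = ((240*t + 60*k + 114), (60*t + 24*k + 34))"

definition C1_1 :: "int \<Rightarrow> int \<Rightarrow> zsqrt" where
  "C1_1 t k = ((- 7200*t^2 - 1440*t*k - 5280*t - 720*k^2 - 1416*k - 1250), (- 720*t^2 - 1440*t*k - 1416*t - 72*k^2 - 528*k - 399))"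

definition G1_1 :: "int \<Rightarrow> int \<Rightarrow> zsqrt" where
  "G1_1 t k = ((- 1800*t^2 - 360*t*k - 1320*t - 180*k^2 - 354*k - 310), (- 180*t^2 - 360*t*k - 354*t - 18*k^2 - 132*k - 99))"

definition L1_1 :: "int \<Rightarrow> int \<Rightarrow> zsqrt" where
  "L1_1 t k = ((- 1800*t^2 - 360*t*k - 1440*t - 180*k^2 - 384*k - 374), (- 180*t^2 - 360*t*k - 384*t - 18*k^2 - 144*k - 117))"

definition X1_2 :: "int \<Rightarrow> int \<Rightarrow> zsqrt" where
  "X1_2 t k = ((240*t + 60*k + 166), (60*t + 24*k + 45))"

definition Y1_2 :: "int \<Rightarrow> int \<Rightarrow> zsqrt" where
  "Y1_2 t k = ((240*t + 60*k + 162), (60*t + 24*k + 46))"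

definition C1_2 :: "int \<Rightarrow> int \<Rightarrow> zsqrt" where
  "C1_2 t k = ((- 7200*t^2 - 1440*t*k - 8160*t - 720*k^2 - 1704*k - 2594), (- 720*t^2 - 1440*t*k - 1704*t - 72*k^2 - 816*k - 711))"

definition G1_2 :: "int \<Rightarrow> int \<Rightarrow> zsqrt" where
  "G1_2 t k = ((- 1800*t^2 - 360*t*k - 2040*t - 180*k^2 - 426*k - 646), (- 180*t^2 - 360*t*k - 426*t - 18*k^2 - 204*k - 177))"

definition L1_2 :: "int \<Rightarrow> int \<Rightarrow> zsqrt" where
  "L1_2 t k = ((- 1800*t^2 - 360*t*k - 2160*t - 180*k^2 - 456*k - 734), (- 180*t^2 - 360*t*k - 456*t - 18*k^2 - 216*k - 201))"

definition X2_3 :: "int \<Rightarrow> int \<Rightarrow> zsqrt" where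
  "X2_3 t k = ((- 120*t + 60*k - 72), (60*t - 12*k + 37))"

definition Y2_3 :: "int \<Rightarrow> int \<Rightarrow> zsqrt" where
  "Y2_3 t k = ((- 120*t + 60*k - 74), (60*t - 12*k + 36))"

definition C2_3 :: "int \<Rightarrow> int \<Rightarrow> zsqrt" where
  "C2_3 t k = ((14400*t^2 - 10080*t*k + 17520*t + 1440*k^2 - 6072*k + 5328), (- 5040*t^2 + 2880*t*k - 6072*t - 504*k^2 + 1752*k - 1829))"

definition G2_3 :: "int \<Rightarrow> int \<Rightarrow> zsqrt" where
  "G2_3 t k = ((3600*t^2 - 2520*t*k + 4380*t + 360*k^2 - 1518*k + 1332), (- 1260*t^2 + 720*t*k - 1518*t - 126*k^2 + 438*k - 457))"

definition L2_3 :: "int \<Rightarrow> int \<Rightarrow> zsqrt" where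
  "L2_3 t k = ((3600*t^2 - 2520*t*k + 4440*t + 360*k^2 - 1548*k + 1368), (- 1260*t^2 + 720*t*k - 1548*t - 126*k^2 + 444*k - 476))"

definition X2_4 :: "int \<Rightarrow> int \<Rightarrow> zsqrt" where
  "X2_4 t k = ((- 120*t + 60*k - 96), (60*t - 12*k + 49))"

definition Y2_4 :: "int \<Rightarrow> int \<Rightarrow> zsqrt" where
  "Y2_4 t k = ((- 120*t + 60*k - 98), (60*t - 12*k + 48))"

definition C2_4 :: "int \<Rightarrow> int \<Rightarrow> zsqrt" where
  "C2_4 t k = ((14400*t^2 - 10080*t*k + 23280*t + 1440*k^2 - 8088*k + 9408), (- 5040*t^2 + 2880*t*k - 8088*t - 504*k^2 + 2328*k - 3245))"

definition G2_4 :: "int \<Rightarrow> int \<Rightarrow> zsqrt" where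
  "G2_4 t k = ((3600*t^2 - 2520*t*k + 5820*t + 360*k^2 - 2022*k + 2352), (- 1260*t^2 + 720*t*k - 2022*t - 126*k^2 + 582*k - 811))"

definition L2_4 :: "int \<Rightarrow> int \<Rightarrow> zsqrt" where
  "L2_4 t k = ((3600*t^2 - 2520*t*k + 5880*t + 360*k^2 - 2052*k + 2400), (- 1260*t^2 + 720*t*k - 2052*t - 126*k^2 + 588*k - 836))"


lemma inst1_1:
  fixes t k :: int
  shows "infinite {S. is_Dn_quadruple 10 (4 * (12 * (5 * t + 1) + 9) + 2, 4 * (6 * k + 3)) S}"
proof (rule family[where GG = "G1_1 t k" and Z = "(10, 3)" and C = "C1_1 t k" and LL = "L1_1 t k"
      and X = "X1_1 t k" and Y = "Y1_1 t k"])
  show "4 * fst (G1_1 t k) = fst (10, 3) + fst (C1_1 t k)" "4 * snd (G1_1 t k) = snd (10, 3) + snd (C1_1 t k)"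
    by (simp_all add: X1_1_def Y1_1_def C1_1_def G1_1_def L1_1_def algebra_simps)
  show "4 * fst (L1_1 t k) = fst (C1_1 t k) - fst (10, 3) - 2 * fst (X1_1 t k)"
       "4 * snd (L1_1 t k) = snd (C1_1 t k) - snd (10, 3) - 2 * snd (X1_1 t k)"
    by (simp_all add: X1_1_def Y1_1_def C1_1_def G1_1_def L1_1_def algebra_simps)
  show "emb (10, 3) * emb (C1_1 t k) = 4 * emb (4 * (12 * (5 * t + 1) + 9) + 2, 4 * (6 * k + 3)) - (emb (X1_1 t k))^2"
    by (rule Cq_from_pair) (simp add: zs_mul_def X1_1_def Y1_1_def C1_1_def G1_1_def L1_1_def power2_eq_square algebra_simps)
  show "(emb (X1_1 t k))^2 = (emb (Y1_1 t k))^2 + 3 * emb (4 * (12 * (5 * t + 1) + 9) + 2, 4 * (6 * k + 3))"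
    by (rule D_from_pair) (simp_all add: zs_mul_def X1_1_def Y1_1_def C1_1_def G1_1_def L1_1_def power2_eq_square algebra_simps)
  show "emb (10, 3) \<ge> 1" by (simp add: emb_def)
  show "emb (C1_1 t k) \<noteq> 0" by (rule nz_from_odd) (simp add: X1_1_def Y1_1_def C1_1_def G1_1_def L1_1_def)
  show "emb (X1_1 t k) \<noteq> 0" by (rule nz_from_odd) (simp add: X1_1_def Y1_1_def C1_1_def G1_1_def L1_1_def)
qed

lemma inst1_2:
  fixes t k :: int
  shows "infinite {S. is_Dn_quadruple 10 (4 * (12 * (5 * t + 2) + 9) + 2, 4 * (6 * k + 3)) S}"
proof (rule family[where GG = "G1_2 t k" and Z = "(10, 3)" and C = "C1_2 t k" and LL = "L1_2 t k"
      and X = "X1_2 t k" and Y = "Y1_2 t k"])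
  show "4 * fst (G1_2 t k) = fst (10, 3) + fst (C1_2 t k)" "4 * snd (G1_2 t k) = snd (10, 3) + snd (C1_2 t k)"
    by (simp_all add: X1_2_def Y1_2_def C1_2_def G1_2_def L1_2_def algebra_simps)
  show "4 * fst (L1_2 t k) = fst (C1_2 t k) - fst (10, 3) - 2 * fst (X1_2 t k)"
       "4 * snd (L1_2 t k) = snd (C1_2 t k) - snd (10, 3) - 2 * snd (X1_2 t k)"
    by (simp_all add: X1_2_def Y1_2_def C1_2_def G1_2_def L1_2_def algebra_simps)
  show "emb (10, 3) * emb (C1_2 t k) = 4 * emb (4 * (12 * (5 * t + 2) + 9) + 2, 4 * (6 * k + 3)) - (emb (X1_2 t k))^2"
    by (rule Cq_from_pair) (simp add: zs_mul_def X1_2_def Y1_2_def C1_2_def G1_2_def L1_2_def power2_eq_square algebra_simps)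
  show "(emb (X1_2 t k))^2 = (emb (Y1_2 t k))^2 + 3 * emb (4 * (12 * (5 * t + 2) + 9) + 2, 4 * (6 * k + 3))"
    by (rule D_from_pair) (simp_all add: zs_mul_def X1_2_def Y1_2_def C1_2_def G1_2_def L1_2_def power2_eq_square algebra_simps)
  show "emb (10, 3) \<ge> 1" by (simp add: emb_def)
  show "emb (C1_2 t k) \<noteq> 0" by (rule nz_from_odd) (simp add: X1_2_def Y1_2_def C1_2_def G1_2_def L1_2_def)
  show "emb (X1_2 t k) \<noteq> 0" by (rule nz_from_odd) (simp add: X1_2_def Y1_2_def C1_2_def G1_2_def L1_2_def)
qed

lemma inst2_3:
  fixes t k :: int
  shows "infinite {S. is_Dn_quadruple 10 (48 * (5 * t + 3) + 2, 24 * k) S}"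
proof (rule family[where GG = "G2_3 t k" and Z = "(0, 1)" and C = "C2_3 t k" and LL = "L2_3 t k"
      and X = "X2_3 t k" and Y = "Y2_3 t k"])
  show "4 * fst (G2_3 t k) = fst (0, 1) + fst (C2_3 t k)" "4 * snd (G2_3 t k) = snd (0, 1) + snd (C2_3 t k)"
    by (simp_all add: X2_3_def Y2_3_def C2_3_def G2_3_def L2_3_def algebra_simps)
  show "4 * fst (L2_3 t k) = fst (C2_3 t k) - fst (0, 1) - 2 * fst (X2_3 t k)"
       "4 * snd (L2_3 t k) = snd (C2_3 t k) - snd (0, 1) - 2 * snd (X2_3 t k)"
    by (simp_all add: X2_3_def Y2_3_def C2_3_def G2_3_def L2_3_def algebra_simps)
  show "emb (0, 1) * emb (C2_3 t k) = 4 * emb (48 * (5 * t + 3) + 2, 24 * k) - (emb (X2_3 t k))^2"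
    by (rule Cq_from_pair) (simp add: zs_mul_def X2_3_def Y2_3_def C2_3_def G2_3_def L2_3_def power2_eq_square algebra_simps)
  show "(emb (X2_3 t k))^2 = (emb (Y2_3 t k))^2 + 3 * emb (48 * (5 * t + 3) + 2, 24 * k)"
    by (rule D_from_pair) (simp_all add: zs_mul_def X2_3_def Y2_3_def C2_3_def G2_3_def L2_3_def power2_eq_square algebra_simps)
  show "emb (0, 1) \<ge> 1" by (simp add: emb_def)
  show "emb (C2_3 t k) \<noteq> 0" by (rule nz_from_odd) (simp add: X2_3_def Y2_3_def C2_3_def G2_3_def L2_3_def)
  show "emb (X2_3 t k) \<noteq> 0" by (rule nz_from_odd) (simp add: X2_3_def Y2_3_def C2_3_def G2_3_def L2_3_def)
qed

lemma inst2_4: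
  fixes t k :: int
  shows "infinite {S. is_Dn_quadruple 10 (48 * (5 * t + 4) + 2, 24 * k) S}"
proof (rule family[where GG = "G2_4 t k" and Z = "(0, 1)" and C = "C2_4 t k" and LL = "L2_4 t k"
      and X = "X2_4 t k" and Y = "Y2_4 t k"])
  show "4 * fst (G2_4 t k) = fst (0, 1) + fst (C2_4 t k)" "4 * snd (G2_4 t k) = snd (0, 1) + snd (C2_4 t k)"
    by (simp_all add: X2_4_def Y2_4_def C2_4_def G2_4_def L2_4_def algebra_simps)
  show "4 * fst (L2_4 t k) = fst (C2_4 t k) - fst (0, 1) - 2 * fst (X2_4 t k)"
       "4 * snd (L2_4 t k) = snd (C2_4 t k) - snd (0, 1) - 2 * snd (X2_4 t k)"
    by (simp_all add: X2_4_def Y2_4_def C2_4_def G2_4_def L2_4_def algebra_simps)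
  show "emb (0, 1) * emb (C2_4 t k) = 4 * emb (48 * (5 * t + 4) + 2, 24 * k) - (emb (X2_4 t k))^2"
    by (rule Cq_from_pair) (simp add: zs_mul_def X2_4_def Y2_4_def C2_4_def G2_4_def L2_4_def power2_eq_square algebra_simps)
  show "(emb (X2_4 t k))^2 = (emb (Y2_4 t k))^2 + 3 * emb (48 * (5 * t + 4) + 2, 24 * k)"
    by (rule D_from_pair) (simp_all add: zs_mul_def X2_4_def Y2_4_def C2_4_def G2_4_def L2_4_def power2_eq_square algebra_simps)
  show "emb (0, 1) \<ge> 1" by (simp add: emb_def)
  show "emb (C2_4 t k) \<noteq> 0" by (rule nz_from_odd) (simp add: X2_4_def Y2_4_def C2_4_def G2_4_def L2_4_def)
  show "emb (X2_4 t k) \<noteq> 0" by (rule nz_from_odd) (simp add: X2_4_def Y2_4_def C2_4_def G2_4_def L2_4_def)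
qed

lemma split5: assumes "m mod 5 = (r::int)" shows "m = 5 * (m div 5) + r"
  using assms div_mult_mod_eq[of m 5] by linarith

theorem mainTheorem7:
  fixes m k :: int
  shows "(m mod 5 \<in> {1, 2} \<longrightarrow>
            infinite {S. is_Dn_quadruple 10 (4 * (12 * m + 9) + 2, 4 * (6 * k + 3)) S})
       \<and> (m mod 5 \<in> {3, 4} \<longrightarrow>
            infinite {S. is_Dn_quadruple 10 (48 * m + 2, 24 * k) S})"
proof (intro conjI impI)
  assume "m mod 5 \<in> {1, 2}"
  then consider "m mod 5 = 1" | "m mod 5 = 2" by auto
  then show "infinite {S. is_Dn_quadruple 10 (4 * (12 * m + 9) + 2, 4 * (6 * k + 3)) S}"
  proof cases
    case 1
    have mt: "m = 5 * (m div 5) + 1" by (rule split5[OF 1])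
    show ?thesis by (subst mt) (rule inst1_1)
  next
    case 2
    have mt: "m = 5 * (m div 5) + 2" by (rule split5[OF 2])
    show ?thesis by (subst mt) (rule inst1_2)
  qed
next
  assume "m mod 5 \<in> {3, 4}"
  then consider "m mod 5 = 3" | "m mod 5 = 4" by auto
  then show "infinite {S. is_Dn_quadruple 10 (48 * m + 2, 24 * k) S}"
  proof cases
    case 1
    have mt: "m = 5 * (m div 5) + 3" by (rule split5[OF 1])
    show ?thesis by (subst mt) (rule inst2_3)
  next
    case 2
    have mt: "m = 5 * (m div 5) + 4" by (rule split5[OF 2])
    show ?thesis by (subst mt) (rule inst2_4)
  qed
qed

end
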